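(* Let $L$ and ${}^*L=e^{\sigma(x)}L+\beta$ be as in the context and $\tau=e^{\sigma}\,{}^*L/L$. Then $${}^*S_{hijk}=\tau S_{hijk}-\frac{\tau}{2\,{}^*L}\big[h_{ik}H_{jh}+h_{jh}H_{ik}-h_{hk}H_{ij}-h_{ij}H_{hk}\big].$$
   Context: $M$ is a smooth manifold of dimension $n$ with local coordinates $(x^i)$ and induced fiber coordinates $(y^i)$ on $TM$. $L(x,y)$ is a Finsler metric: positive and smooth for $y\neq0$, positively homogeneous of degree 1 in $y$, with positive definite fundamental tensor $g_{ij}=\frac12\frac{\partial^2L^2}{\partial y^i\partial y^j}$ and inverse $g^{ij}$. $\sigma(x)$ is a smooth function on $M$ and $\beta(x,y)=b_i(x)y^i$ is a 1-form; the conformal $\beta$-change is ${}^*L=e^{\sigma(x)}L+\beta$, assumed to be again a Finsler metric. Notation: $l_i=\partial L/\partial y^i$, $l^i=g^{ij}l_j$, $h_{ij}=g_{ij}-l_il_j$, $c_{ijk}=\frac12\partial g_{ij}/\partial y^k$, $c_i{}^r{}_j=g^{rk}c_{ijk}$, $b^i=g^{ij}b_j$, $m_i=b_i-\frac{\beta}{L}l_i$, $m^i=g^{ij}m_j$, $m^2=m_im^i$, $H_{ij}=c_i{}^r{}_jm_r+\frac{1}{2\,{}^*L}m_im_j+\frac{1}{4\,{}^*L}h_{ij}m^2$, $S_{hijk}=c_{ijr}c_h{}^r{}_k-c_{ikr}c_h{}^r{}_j$. Quantities built from ${}^*L$ by the same formulas (using ${}^*g_{ij}$ and its inverse ${}^*g^{ij}$,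 e.g. ${}^*c_h{}^r{}_k={}^*g^{rs}\,{}^*c_{hsk}$) are denoted with a left asterisk. *)

theory Defs
  imports "HOL-Analysis.Analysis"
begin

definition dpd :: "'a::real_normed_vector \<Rightarrow> ('a \<Rightarrow> real) \<Rightarrow> 'a \<Rightarrow> real" where
  "dpd v f y = deriv (\<lambda>t. f (y + t *\<^sub>R v)) 0"

definition smooth_on :: "'a::euclidean_space set \<Rightarrow> ('a \<Rightarrow> real) \<Rightarrow> bool" where
  "smooth_on S f \<longleftrightarrow>
     (\<forall>vs. set vs \<subseteq> Basis \<longrightarrow> (\<forall>y\<in>S. (foldr dpd vs f) differentiable (at y)))"

definition pd :: "'n::finite \<Rightarrow> (real^'n \<Rightarrow> real) \<Rightarrow> real^'n \<Rightarrow> real" where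
  "pd i F y = dpd (axis i 1) F y"

text \<open>Quantities built from a fibre function F = L(x, .).\<close>
definition gt :: "(real^'n::finite \<Rightarrow> real) \<Rightarrow> 'n \<Rightarrow> 'n \<Rightarrow> real^'n \<Rightarrow> real" where
  "gt F i j y = 1/2 * pd i (pd j (\<lambda>z. (F z)^2)) y"

definition gi :: "(real^'n::finite \<Rightarrow> real) \<Rightarrow> 'n \<Rightarrow> 'n \<Rightarrow> real^'n \<Rightarrow> real" where
  "gi F i j y = matrix_inv (\<chi> a b. gt F a b y) $ i $ j"

definition ll :: "(real^'n::finite \<Rightarrow> real) \<Rightarrow> 'n \<Rightarrow> real^'n \<Rightarrow> real" where
  "ll F i y = pd i F y"

definition hh :: "(real^'n::finite \<Rightarrow> real) \<Rightarrow> 'n \<Rightarrow> 'n \<Rightarrow> real^'n \<Rightarrow> real" where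
  "hh F i j y = gt F i j y - ll F i y * ll F j y"

definition ct :: "(real^'n::finite \<Rightarrow> real) \<Rightarrow> 'n \<Rightarrow> 'n \<Rightarrow> 'n \<Rightarrow> real^'n \<Rightarrow> real" where
  "ct F i j k y = 1/2 * pd k (\<lambda>z. gt F i j z) y"

definition cu :: "(real^'n::finite \<Rightarrow> real) \<Rightarrow> 'n \<Rightarrow> 'n \<Rightarrow> 'n \<Rightarrow> real^'n \<Rightarrow> real" where
  "cu F i r j y = (\<Sum>s\<in>UNIV. gi F r s y * ct F i s j y)"

definition SS :: "(real^'n::finite \<Rightarrow> real) \<Rightarrow> 'n \<Rightarrow> 'n \<Rightarrow> 'n \<Rightarrow> 'n \<Rightarrow> real^'n \<Rightarrow> real" where
  "SS F h i j k y = (\<Sum>r\<in>UNIV. ct F i j r y * cu F h r k y - ct F i k r y * cu F h r j y)"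

text \<open>m_i = b_i - (beta/L) l_i, with beta = b . y\<close>
definition mm :: "(real^'n::finite \<Rightarrow> real) \<Rightarrow> real^'n \<Rightarrow> 'n \<Rightarrow> real^'n \<Rightarrow> real" where
  "mm F b i y = b $ i - ((b \<bullet> y) / F y) * ll F i y"

definition mu :: "(real^'n::finite \<Rightarrow> real) \<Rightarrow> real^'n \<Rightarrow> 'n \<Rightarrow> real^'n \<Rightarrow> real" where
  "mu F b i y = (\<Sum>j\<in>UNIV. gi F i j y * mm F b j y)"

definition msq :: "(real^'n::finite \<Rightarrow> real) \<Rightarrow> real^'n \<Rightarrow> real^'n \<Rightarrow> real" where
  "msq F b y = (\<Sum>i\<in>UNIV. mm F b i y * mu F b i y)"

definition HH :: "(real^'n::finite \<Rightarrow> real) \<Rightarrow> real^'n \<Rightarrow> (real^'n \<Rightarrow> real)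
                   \<Rightarrow> 'n \<Rightarrow> 'n \<Rightarrow> real^'n \<Rightarrow> real" where
  "HH F b sL i j y = (\<Sum>r\<in>UNIV. cu F i r j y * mm F b r y)
      + mm F b i y * mm F b j y / (2 * sL y) + hh F i j y * msq F b y / (4 * sL y)"

definition finsler_on :: "(real^'n::finite) set \<Rightarrow> (real^'n \<Rightarrow> real^'n \<Rightarrow> real) \<Rightarrow> bool" where
  "finsler_on U L \<longleftrightarrow>
     smooth_on (U \<times> (UNIV - {0})) (\<lambda>(x, y). L x y)
   \<and> (\<forall>x\<in>U. \<forall>y. y \<noteq> 0 \<longrightarrow> L x y > 0)
   \<and> (\<forall>x\<in>U. \<forall>y. \<forall>c::real. c > 0 \<longrightarrow> L x (c *\<^sub>R y) = c * L x y)
   \<and> (\<forall>x\<in>U. \<forall>y. y \<noteq> 0 \<longrightarrow>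
        (\<forall>v::real^'n. v \<noteq> 0 \<longrightarrow> (\<Sum>i\<in>UNIV. \<Sum>j\<in>UNIV. gt (L x) i j y * v $ i * v $ j) > 0))"

end

theory Submission
  imports Defs
begin


lemma line_deriv:
  fixes f :: "'a::real_normed_vector \<Rightarrow> real"
  assumes "f differentiable (at (p + t *\<^sub>R v))"
  shows "((\<lambda>s. f (p + s *\<^sub>R v)) has_real_derivative frechet_derivative f (at (p + t *\<^sub>R v)) v) (at t)"
proof -
  let ?f' = "frechet_derivative f (at (p + t *\<^sub>R v))"
  have f: "(f has_derivative ?f') (at (p + t *\<^sub>R v))"
    using assms frechet_derivative_works by blast
  have lin: "linear ?f'" using f has_derivative_linear by blast
  have g: "((\<lambda>s. p + s *\<^sub>R v) has_derivative (\<lambda>h. h *\<^sub>R v)) (at t)"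
    by (auto intro!: derivative_eq_intros)
  have "((\<lambda>s. f (p + s *\<^sub>R v)) has_derivative (\<lambda>h. ?f' (h *\<^sub>R v))) (at t)"
    using diff_chain_at[OF g f] by (simp add: o_def)
  moreover have "(\<lambda>h. ?f' (h *\<^sub>R v)) = (\<lambda>h. ?f' v * h)"
    using linear_scale[OF lin] by (auto simp: mult.commute)
  ultimately show ?thesis by (simp add: has_field_derivative_def)
qed

lemma pd_has:
  assumes "f differentiable (at z)"
  shows "((\<lambda>t. f (z + t *\<^sub>R axis i 1)) has_real_derivative pd i f z) (at 0)"
proof -
  have "((\<lambda>t. f (z + t *\<^sub>R axis i 1)) has_real_derivative frechet_derivative f (at z) (axis i 1)) (at 0)"
    using line_deriv[of f z 0 "axis i 1"] assms by simp
  moreover then have "pd i f z = frechet_derivative f (at z) (axis i 1)"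
    unfolding pd_def dpd_def by (rule DERIV_imp_deriv)
  ultimately show ?thesis by simp
qed

lemma pd_frechet:
  assumes "f differentiable (at z)"
  shows "pd i f z = frechet_derivative f (at z) (axis i 1)"
  using line_deriv[of f z 0 "axis i 1"] assms unfolding pd_def dpd_def
  by (simp add: DERIV_imp_deriv)

lemma pd_DERIV:
  assumes "((\<lambda>t. f (z + t *\<^sub>R axis i 1)) has_real_derivative D) (at 0)"
  shows "pd i f z = D"
  using assms unfolding pd_def dpd_def by (rule DERIV_imp_deriv)

lemma pd_mult:
  assumes "f differentiable (at z)" "g differentiable (at z)"
  shows "pd i (\<lambda>w. f w * g w) z = pd i f z * g z + f z * pd i g z"
  apply (rule pd_DERIV)
  using DERIV_mult[OF pd_has[OF assms(1)] pd_has[OF assms(2)], of i i] by (simp add: mult.commute)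

lemma pd_add:
  assumes "f differentiable (at z)" "g differentiable (at z)"
  shows "pd i (\<lambda>w. f w + g w) z = pd i f z + pd i g z"
  apply (rule pd_DERIV)
  using DERIV_add[OF pd_has[OF assms(1)] pd_has[OF assms(2)], of i i] by simp

lemma pd_cmult:
  assumes "f differentiable (at z)"
  shows "pd i (\<lambda>w. c * f w) z = c * pd i f z"
  apply (rule pd_DERIV)
  using DERIV_cmult[OF pd_has[OF assms(1)], of c i] by simp

lemma pd_inner:
  "pd i (\<lambda>w. c \<bullet> w) z = c $ i"
proof (rule pd_DERIV)
  have "(\<lambda>t. c \<bullet> (z + t *\<^sub>R axis i 1)) = (\<lambda>t. c \<bullet> z + t * (c $ i))"
    by (auto simp: inner_add_right cart_eq_inner_axis)
  moreover have "((\<lambda>t. c \<bullet> z + t * (c $ i)) has_real_derivative c $ i) (at 0)"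
    by (auto intro!: derivative_eq_intros)
  ultimately show "((\<lambda>t. c \<bullet> (z + t *\<^sub>R axis i 1)) has_real_derivative c $ i) (at 0)" by simp
qed

lemma pd_const: "pd i (\<lambda>w. c) z = 0"
  by (rule pd_DERIV) auto

lemma pd_cong:
  assumes "open S" "z \<in> S" "\<And>w. w \<in> S \<Longrightarrow> f w = g w"
  shows "pd i f z = pd i g z"
  unfolding pd_def dpd_def
proof (rule deriv_cong_ev)
  have "open ((\<lambda>t::real. z + t *\<^sub>R axis i 1) -` S)"
    by (rule continuous_open_vimage) (auto intro!: continuous_intros assms)
  then have "eventually (\<lambda>t. t \<in> (\<lambda>t::real. z + t *\<^sub>R axis i 1) -` S) (nhds 0)"
    using assms(2) by (intro eventually_nhds_in_open) auto
  then show "eventually (\<lambda>t. f (z + t *\<^sub>R axis i 1) = g (z + t *\<^sub>R axis i 1)) (nhds 0)"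
    by eventually_elim (use assms in auto)
qed simp




lemma foldr_dpd_pair:
  fixes Lf :: "(real^'n) \<times> (real^'n) \<Rightarrow> real"
  shows "foldr dpd (map (\<lambda>i. (0::real^'n, axis i (1::real))) is) Lf (x, w)
         = foldr pd is (\<lambda>w. Lf (x, w)) w"
proof (induction "is" arbitrary: w)
  case Nil
  then show ?case by simp
next
  case (Cons i "is")
  have e: "\<And>t. (x, w) + t *\<^sub>R (0::real^'n, axis i (1::real)) = (x, w + t *\<^sub>R axis i 1)"
    by simp
  have "foldr dpd (map (\<lambda>i. (0::real^'n, axis i (1::real))) (i # is)) Lf (x, w)
      = dpd (0, axis i 1) (foldr dpd (map (\<lambda>i. (0::real^'n, axis i (1::real))) is) Lf) (x, w)"
    by simp
  also have "\<dots> = deriv (\<lambda>t. foldr dpd (map (\<lambda>i. (0::real^'n, axis i (1::real))) is) Lf (x, w + t *\<^sub>R axis i 1)) 0"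
    by (simp only: dpd_def e)
  also have "\<dots> = deriv (\<lambda>t. foldr pd is (\<lambda>w. Lf (x, w)) (w + t *\<^sub>R axis i 1)) 0"
    by (simp only: Cons.IH)
  also have "\<dots> = foldr pd (i # is) (\<lambda>w. Lf (x, w)) w"
    by (simp only: foldr_Cons o_def pd_def dpd_def)
  finally show ?case .
qed

lemma smooth_pd:
  fixes L :: "real^'n \<Rightarrow> real^'n \<Rightarrow> real"
  assumes "smooth_on (U \<times> (UNIV - {0})) (\<lambda>(x, y). L x y)" "x \<in> U" "z \<noteq> 0"
  shows "(foldr pd is (L x)) differentiable (at z)"
proof -
  let ?Lf = "(\<lambda>(x, y). L x y) :: (real^'n) \<times> (real^'n) \<Rightarrow> real"
  let ?vs = "map (\<lambda>i. (0::real^'n, axis i (1::real))) is"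
  have "set ?vs \<subseteq> Basis"
    by (auto simp: Basis_prod_def Basis_vec_def)
  then have d: "(foldr dpd ?vs ?Lf) differentiable (at (x, z))"
    using assms unfolding smooth_on_def by auto
  have eq: "foldr pd is (L x) = (foldr dpd ?vs ?Lf) \<circ> (\<lambda>w. (x, w))"
    using foldr_dpd_pair[of "is" ?Lf x] by (auto simp: o_def)
  have "(\<lambda>w::real^'n. (x, w)) differentiable (at z)"
    by (auto intro!: derivative_intros simp: differentiable_def)
  then show ?thesis
    unfolding eq using d by (intro differentiable_chain_at) auto
qed

lemma pd_homog:
  fixes H K :: "real^'n \<Rightarrow> real"
  assumes "\<And>z. H (c *\<^sub>R z) = a * K z" "c > 0" "K differentiable (at w)"
  shows "pd i H (c *\<^sub>R w) = a / c * pd i K w"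
proof (rule pd_DERIV)
  have e: "\<And>t. H (c *\<^sub>R w + t *\<^sub>R axis i 1) = a * K (w + t *\<^sub>R ((1/c) *\<^sub>R axis i 1))"
  proof -
    fix t
    have "c *\<^sub>R w + t *\<^sub>R axis i 1 = c *\<^sub>R (w + t *\<^sub>R ((1/c) *\<^sub>R axis i 1))"
      using assms(2) by (simp add: algebra_simps)
    then show "H (c *\<^sub>R w + t *\<^sub>R axis i 1) = a * K (w + t *\<^sub>R ((1/c) *\<^sub>R axis i 1))"
      using assms(1) by simp
  qed
  have lin: "linear (frechet_derivative K (at w))"
    using assms(3) frechet_derivative_works has_derivative_linear by blast
  have "((\<lambda>t. K (w + t *\<^sub>R ((1/c) *\<^sub>R axis i 1))) has_real_derivative
          frechet_derivative K (at w) ((1/c) *\<^sub>R axis i 1)) (at 0)"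
    using line_deriv[of K w 0 "(1/c) *\<^sub>R axis i 1"] assms(3) by simp
  moreover have "frechet_derivative K (at w) ((1/c) *\<^sub>R axis i 1) = 1/c * pd i K w"
    using linear_scale[OF lin] pd_frechet[OF assms(3)] by simp
  ultimately have "((\<lambda>t. a * K (w + t *\<^sub>R ((1/c) *\<^sub>R axis i 1))) has_real_derivative a * (1/c * pd i K w)) (at 0)"
    by (intro DERIV_cmult) auto
  then show "((\<lambda>t. H (c *\<^sub>R w + t *\<^sub>R axis i 1)) has_real_derivative a / c * pd i K w) (at 0)"
    by (simp add: e)
qed

lemma sum_axis_expand: "(\<Sum>i\<in>UNIV. (y::real^'n) $ i *\<^sub>R axis i 1) = y"
  by (simp add: vec_eq_iff axis_def if_distrib cong: if_cong)

lemma euler: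
  fixes G :: "real^'n \<Rightarrow> real"
  assumes "G differentiable (at y)" "((\<lambda>t. G (y + t *\<^sub>R y)) has_real_derivative D) (at 0)"
  shows "(\<Sum>i\<in>UNIV. y $ i * pd i G y) = D"
proof -
  let ?G' = "frechet_derivative G (at y)"
  have lin: "linear ?G'"
    using assms(1) frechet_derivative_works has_derivative_linear by blast
  have "((\<lambda>t. G (y + t *\<^sub>R y)) has_real_derivative ?G' y) (at 0)"
    using line_deriv[of G y 0 y] assms(1) by simp
  then have "D = ?G' y" using assms(2) DERIV_unique by blast
  also have "\<dots> = ?G' (\<Sum>i\<in>UNIV. y $ i *\<^sub>R axis i 1)" by (simp add: sum_axis_expand)
  also have "\<dots> = (\<Sum>i\<in>UNIV. y $ i * ?G' (axis i 1))"
    using linear_sum[OF lin, of "\<lambda>i. y $ i *\<^sub>R axis i 1" UNIV] linear_scale[OF lin] by simp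
  also have "\<dots> = (\<Sum>i\<in>UNIV. y $ i * pd i G y)"
    using pd_frechet[OF assms(1)] by simp
  finally show ?thesis by simp
qed




lemma mvt_mixed:
  fixes f :: "real^'n \<Rightarrow> real"
  assumes S: "ball z r \<subseteq> S" and s: "s > 0" "2 * s < r"
    and d: "\<forall>w\<in>S. f differentiable (at w)" "\<forall>w\<in>S. pd i f differentiable (at w)"
  shows "\<exists>\<xi> \<eta>. 0<\<xi> \<and> \<xi><s \<and> 0<\<eta> \<and> \<eta><s \<and>
     f (z + s *\<^sub>R axis i 1 + s *\<^sub>R axis j 1) - f (z + s *\<^sub>R axis i 1) - f (z + s *\<^sub>R axis j 1) + f z
     = s * s * pd j (pd i f) (z + \<xi> *\<^sub>R axis i 1 + \<eta> *\<^sub>R axis j 1)"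
proof -
  define a :: "real^'n" where "a = axis i 1"
  define b :: "real^'n" where "b = axis j 1"
  have na: "norm a = 1" and nb: "norm b = 1" by (auto simp: a_def b_def)
  have inS: "z + t *\<^sub>R a + u *\<^sub>R b \<in> S" if "\<bar>t\<bar> \<le> s" "\<bar>u\<bar> \<le> s" for t u
  proof -
    have "norm (t *\<^sub>R a + u *\<^sub>R b) \<le> norm (t *\<^sub>R a) + norm (u *\<^sub>R b)"
      by (rule norm_triangle_ineq)
    also have "\<dots> = \<bar>t\<bar> + \<bar>u\<bar>" using na nb by simp
    finally have "norm (t *\<^sub>R a + u *\<^sub>R b) < r" using that s by linarith
    moreover have "dist z (z + (t *\<^sub>R a + u *\<^sub>R b)) = norm (t *\<^sub>R a + u *\<^sub>R b)"
      by (simp add: dist_norm norm_minus_commute add.commute)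
    ultimately have "z + t *\<^sub>R a + u *\<^sub>R b \<in> ball z r"
      by (simp add: add.assoc)
    then show ?thesis using S by blast
  qed
  define \<phi> where "\<phi> t = f (z + s *\<^sub>R b + t *\<^sub>R a) - f (z + t *\<^sub>R a)" for t
  define \<phi>' where "\<phi>' t = pd i f (z + s *\<^sub>R b + t *\<^sub>R a) - pd i f (z + t *\<^sub>R a)" for t
  have "DERIV \<phi> t :> \<phi>' t" if "0 \<le> t" "t \<le> s" for t
  proof -
    have p1: "z + s *\<^sub>R b + t *\<^sub>R a \<in> S" using inS[of t s] that s by (simp add: add_ac)
    have p2: "z + t *\<^sub>R a \<in> S" using inS[of t 0] that s by simp
    have D1: "((\<lambda>t. f (z + s *\<^sub>R b + t *\<^sub>R a)) has_real_derivative pd i f (z + s *\<^sub>R b + t *\<^sub>R a)) (at t)"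
      using line_deriv[of f "z + s *\<^sub>R b" t a] d(1) p1 pd_frechet[of f "z + s *\<^sub>R b + t *\<^sub>R a" i]
      by (simp add: a_def)
    have D2: "((\<lambda>t. f (z + t *\<^sub>R a)) has_real_derivative pd i f (z + t *\<^sub>R a)) (at t)"
      using line_deriv[of f z t a] d(1) p2 pd_frechet[of f "z + t *\<^sub>R a" i]
      by (simp add: a_def)
    show ?thesis unfolding \<phi>_def[abs_def] \<phi>'_def using DERIV_diff[OF D1 D2] by simp
  qed
  then obtain \<xi> where xi: "0 < \<xi>" "\<xi> < s" "\<phi> s - \<phi> 0 = (s - 0) * \<phi>' \<xi>"
    using MVT2[of 0 s \<phi> \<phi>'] s by blast
  define \<psi> where "\<psi> u = pd i f (z + \<xi> *\<^sub>R a + u *\<^sub>R b)" for u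
  define \<psi>' where "\<psi>' u = pd j (pd i f) (z + \<xi> *\<^sub>R a + u *\<^sub>R b)" for u
  have "DERIV \<psi> u :> \<psi>' u" if "0 \<le> u" "u \<le> s" for u
  proof -
    have p1: "z + \<xi> *\<^sub>R a + u *\<^sub>R b \<in> S" using inS[of \<xi> u] that xi by simp
    show ?thesis
      using line_deriv[of "pd i f" "z + \<xi> *\<^sub>R a" u b] d(2) p1 pd_frechet[of "pd i f" "z + \<xi> *\<^sub>R a + u *\<^sub>R b" j]
      unfolding \<psi>_def[abs_def] \<psi>'_def by (simp add: b_def)
  qed
  then obtain \<eta> where eta: "0 < \<eta>" "\<eta> < s" "\<psi> s - \<psi> 0 = (s - 0) * \<psi>' \<eta>"
    using MVT2[of 0 s \<psi> \<psi>'] s by blast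
  have "\<phi>' \<xi> = \<psi> s - \<psi> 0"
    unfolding \<phi>'_def \<psi>_def by (simp add: add_ac)
  then have "\<phi> s - \<phi> 0 = s * s * \<psi>' \<eta>" using xi eta by simp
  moreover have "\<phi> s - \<phi> 0 = f (z + s *\<^sub>R a + s *\<^sub>R b) - f (z + s *\<^sub>R a) - f (z + s *\<^sub>R b) + f z"
    unfolding \<phi>_def by (simp add: add_ac)
  ultimately show ?thesis using xi eta unfolding \<psi>'_def a_def b_def by auto
qed

lemma clairaut:
  fixes f :: "real^'n \<Rightarrow> real"
  assumes S: "open S" "z \<in> S"
    and d: "\<forall>w\<in>S. f differentiable (at w)" "\<forall>w\<in>S. pd i f differentiable (at w)"
           "\<forall>w\<in>S. pd j f differentiable (at w)"
    and c: "continuous (at z) (pd j (pd i f))" "continuous (at z) (pd i (pd j f))"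
  shows "pd i (pd j f) z = pd j (pd i f) z"
proof (rule ccontr)
  assume ne: "pd i (pd j f) z \<noteq> pd j (pd i f) z"
  define \<epsilon> where "\<epsilon> = \<bar>pd i (pd j f) z - pd j (pd i f) z\<bar> / 2"
  have ep: "\<epsilon> > 0" using ne by (simp add: \<epsilon>_def)
  obtain r where r: "r > 0" "ball z r \<subseteq> S" using S open_contains_ball by blast
  obtain d1 where d1: "d1 > 0" "\<And>p. dist p z < d1 \<Longrightarrow> dist (pd j (pd i f) p) (pd j (pd i f) z) < \<epsilon>"
    using c(1) ep unfolding continuous_at_eps_delta by blast
  obtain d2 where d2: "d2 > 0" "\<And>p. dist p z < d2 \<Longrightarrow> dist (pd i (pd j f) p) (pd i (pd j f) z) < \<epsilon>"
    using c(2) ep unfolding continuous_at_eps_delta by blast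
  define s where "s = min r (min d1 d2) / 3"
  have s: "s > 0" "2 * s < r" "2 * s < d1" "2 * s < d2"
    using r d1 d2 by (auto simp: s_def)
  obtain \<xi> \<eta> where A: "0<\<xi>" "\<xi><s" "0<\<eta>" "\<eta><s"
     "f (z + s *\<^sub>R axis i 1 + s *\<^sub>R axis j 1) - f (z + s *\<^sub>R axis i 1) - f (z + s *\<^sub>R axis j 1) + f z
     = s * s * pd j (pd i f) (z + \<xi> *\<^sub>R axis i 1 + \<eta> *\<^sub>R axis j 1)"
    using mvt_mixed[OF r(2) s(1,2) d(1,2), of j] by blast
  obtain \<xi>' \<eta>' where B: "0<\<xi>'" "\<xi>'<s" "0<\<eta>'" "\<eta>'<s"
     "f (z + s *\<^sub>R axis j 1 + s *\<^sub>R axis i 1) - f (z + s *\<^sub>R axis j 1) - f (z + s *\<^sub>R axis i 1) + f z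
     = s * s * pd i (pd j f) (z + \<xi>' *\<^sub>R axis j 1 + \<eta>' *\<^sub>R axis i 1)"
    using mvt_mixed[OF r(2) s(1,2) d(1,3), of i] by blast
  have nrm: "dist (z + t *\<^sub>R axis i 1 + u *\<^sub>R axis j 1) z \<le> \<bar>t\<bar> + \<bar>u\<bar>" for t u i j
  proof -
    have "norm (t *\<^sub>R axis i 1 + u *\<^sub>R (axis j 1 :: real^'n)) \<le> norm (t *\<^sub>R (axis i 1::real^'n)) + norm (u *\<^sub>R (axis j 1::real^'n))"
      by (rule norm_triangle_ineq)
    then show ?thesis by (simp add: dist_norm)
  qed
  have eq: "pd j (pd i f) (z + \<xi> *\<^sub>R axis i 1 + \<eta> *\<^sub>R axis j 1) = pd i (pd j f) (z + \<xi>' *\<^sub>R axis j 1 + \<eta>' *\<^sub>R axis i 1)"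
  proof -
    have "s * s * pd j (pd i f) (z + \<xi> *\<^sub>R axis i 1 + \<eta> *\<^sub>R axis j 1) = s * s * pd i (pd j f) (z + \<xi>' *\<^sub>R axis j 1 + \<eta>' *\<^sub>R axis i 1)"
    proof -
      have e1: "f (z + s *\<^sub>R axis i 1 + s *\<^sub>R axis j 1) = f (z + s *\<^sub>R axis j 1 + s *\<^sub>R axis i 1)"
        by (simp add: add_ac)
      show ?thesis using A(5) B(5) e1 by linarith
    qed
    then show ?thesis using s by simp
  qed
  have "dist (pd j (pd i f) (z + \<xi> *\<^sub>R axis i 1 + \<eta> *\<^sub>R axis j 1)) (pd j (pd i f) z) < \<epsilon>"
    using d1(2) nrm[of \<xi> i \<eta> j] A s by force
  moreover have "dist (pd i (pd j f) (z + \<xi>' *\<^sub>R axis j 1 + \<eta>' *\<^sub>R axis i 1)) (pd i (pd j f) z) < \<epsilon>"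
    using d2(2) nrm[of \<xi>' j \<eta>' i] B s by force
  ultimately show False using eq unfolding \<epsilon>_def dist_real_def by (simp add: abs_if split: if_splits; linarith)
qed




lemma inv_props:
  fixes M :: "real^'n^'n"
  assumes "invertible M"
  shows "M ** matrix_inv M = mat 1" "matrix_inv M ** M = mat 1"
proof -
  have "\<exists>A'. M ** A' = mat 1 \<and> A' ** M = mat 1" using assms unfolding invertible_def by blast
  then have "M ** matrix_inv M = mat 1 \<and> matrix_inv M ** M = mat 1"
    unfolding matrix_inv_def by (rule someI_ex)
  then show "M ** matrix_inv M = mat 1" "matrix_inv M ** M = mat 1" by auto
qed

lemma posdef_invertible:
  fixes M :: "real^'n^'n"
  assumes "\<forall>v. v \<noteq> 0 \<longrightarrow> (\<Sum>i\<in>UNIV. \<Sum>j\<in>UNIV. M$i$j * v$i * v$j) > 0"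
  shows "invertible M"
proof -
  have "\<forall>x. M *v x = 0 \<longrightarrow> x = 0"
  proof (intro allI impI)
    fix x assume Mx: "M *v x = 0"
    have "(\<Sum>i\<in>UNIV. \<Sum>j\<in>UNIV. M$i$j * x$i * x$j) = (\<Sum>i\<in>UNIV. x$i * (M *v x)$i)"
      by (simp add: matrix_vector_mult_def sum_distrib_left mult_ac)
    also have "\<dots> = 0" using Mx by simp
    finally show "x = 0" using assms by force
  qed
  then show ?thesis
    using matrix_left_invertible_ker invertible_left_inverse by blast
qed

lemma inv_sym:
  fixes M :: "real^'n^'n"
  assumes "transpose M = M" "invertible M"
  shows "transpose (matrix_inv M) = matrix_inv M"
proof -
  let ?N = "matrix_inv M"
  have "transpose ?N ** M = mat 1"
    using inv_props(1)[OF assms(2)] assms(1)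
    by (metis matrix_transpose_mul transpose_mat)
  then have "transpose ?N = transpose ?N ** (M ** ?N)"
    using inv_props(1)[OF assms(2)] by (simp add: matrix_mul_rid)
  also have "\<dots> = ?N" using \<open>transpose ?N ** M = mat 1\<close>
    by (simp add: matrix_mul_assoc matrix_mul_lid)
  finally show ?thesis .
qed

lemma inv_vec:
  fixes M :: "real^'n^'n"
  assumes "invertible M" "M *v z = v"
  shows "matrix_inv M *v v = z"
  using assms inv_props(2)[OF assms(1)] by (metis matrix_vector_mul_assoc matrix_vector_mul_lid)

lemma Q_sym:
  fixes G :: "real^'n^'n"
  assumes "transpose G = G"
  shows "w \<bullet> (G *v v) = v \<bullet> (G *v w)"
proof -
  have "w \<bullet> (G *v v) = (w v* G) \<bullet> v" by (simp add: dot_lmul_matrix)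
  also have "w v* G = transpose G *v w" by simp
  finally show ?thesis using assms by (simp add: inner_commute)
qed




lemma diff_transform_open:
  assumes "open P" "z \<in> P" "\<And>w. w \<in> P \<Longrightarrow> g w = f w" "g differentiable (at z)"
  shows "f differentiable (at z)"
proof -
  obtain g' where "(g has_derivative g') (at z)" using assms(4) unfolding differentiable_def by blast
  then have "(f has_derivative g') (at z)"
    by (rule has_derivative_transform_within_open[OF _ assms(1,2)]) (use assms(3) in auto)
  then show ?thesis unfolding differentiable_def by blast
qed

lemma gt_formula:
  fixes G :: "real^'n \<Rightarrow> real"
  assumes "open P" "w \<in> P" "\<forall>z\<in>P. G differentiable (at z)" "\<forall>z\<in>P. pd j G differentiable (at z)"
  shows "gt G i j w = pd i G w * pd j G w + G w * pd i (pd j G) w"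
proof -
  have "pd j (\<lambda>z. (G z)^2) z = 2 * (G z * pd j G z)" if "z \<in> P" for z
  proof -
    have "pd j (\<lambda>z. (G z)^2) z = pd j (\<lambda>z. G z * G z) z" by (simp add: power2_eq_square)
    also have "\<dots> = pd j G z * G z + G z * pd j G z" using pd_mult assms(3) that by blast
    finally show ?thesis by simp
  qed
  then have "pd i (pd j (\<lambda>z. (G z)^2)) w = pd i (\<lambda>z. 2 * (G z * pd j G z)) w"
    by (intro pd_cong[OF assms(1,2)]) auto
  also have "\<dots> = 2 * pd i (\<lambda>z. G z * pd j G z) w"
    using assms by (intro pd_cmult differentiable_mult) auto
  also have "\<dots> = 2 * (pd i G w * pd j G w + G w * pd i (pd j G) w)"
    using assms by (subst pd_mult) auto
  finally show ?thesis by (simp add: gt_def)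
qed

lemma ct_formula:
  fixes G :: "real^'n \<Rightarrow> real"
  assumes P: "open P" "y \<in> P" and d: "\<forall>z\<in>P. G differentiable (at z)" "\<forall>z\<in>P. pd j G differentiable (at z)"
    "\<forall>z\<in>P. pd i G differentiable (at z)" "\<forall>z\<in>P. pd i (pd j G) differentiable (at z)"
  shows "ct G i j k y = 1/2 * (pd k (pd i G) y * pd j G y + pd i G y * pd k (pd j G) y
           + pd k G y * pd i (pd j G) y + G y * pd k (pd i (pd j G)) y)"
proof -
  have "pd k (\<lambda>z. gt G i j z) y = pd k (\<lambda>z. pd i G z * pd j G z + G z * pd i (pd j G) z) y"
    by (intro pd_cong[OF P]) (use gt_formula[OF P(1) _ d(1,2)] in auto)
  also have "\<dots> = pd k (\<lambda>z. pd i G z * pd j G z) y + pd k (\<lambda>z. G z * pd i (pd j G) z) y"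
    using P d by (intro pd_add differentiable_mult) auto
  also have "\<dots> = pd k (pd i G) y * pd j G y + pd i G y * pd k (pd j G) y
           + (pd k G y * pd i (pd j G) y + G y * pd k (pd i (pd j G)) y)"
    using P d by (simp add: pd_mult[of "pd i G" y "pd j G"] pd_mult[of G y "pd i (pd j G)"])
  finally show ?thesis by (simp add: ct_def)
qed




lemma alg:
  fixes F sL :: "real^'n \<Rightarrow> real" and y l c :: "real^'n" and A :: "real^'n^'n"
    and T :: "'n \<Rightarrow> 'n \<Rightarrow> 'n \<Rightarrow> real" and e :: real
  assumes F0: "F y > 0" and e0: "e > 0" and sLy: "sL y = e * F y + c \<bullet> y" and sL0: "sL y > 0"
    and llF: "\<And>i. ll F i y = l$i" and lyF: "l \<bullet> y = F y" and Ay: "A *v y = 0"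
    and As: "\<And>i j. A$i$j = A$j$i"
    and Ts1: "\<And>k i j. T k i j = T i k j" and Ts2: "\<And>k i j. T k i j = T k j i"
    and Ty: "\<And>i j. (\<Sum>k\<in>UNIV. y$k * T k i j) = - A$i$j"
    and gF: "\<And>i j. gt F i j y = l$i*l$j + F y * A$i$j"
    and cF: "\<And>i j k. ct F i j k y = 1/2 * (A$k$i*l$j + l$i*A$k$j + l$k*A$i$j + F y * T k i j)"
    and gS: "\<And>i j. gt sL i j y = (e*l$i + c$i)*(e*l$j + c$j) + sL y * e * A$i$j"
    and cS: "\<And>i j k. ct sL i j k y = 1/2 * (e*A$k$i*(e*l$j + c$j) + (e*l$i + c$i)*e*A$k$j
                 + (e*l$k + c$k)*e*A$i$j + sL y*e*T k i j)"
    and pF: "\<forall>v. v \<noteq> 0 \<longrightarrow> (\<Sum>i\<in>UNIV. \<Sum>j\<in>UNIV. gt F i j y * v$i * v$j) > 0"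
    and pS: "\<forall>v. v \<noteq> 0 \<longrightarrow> (\<Sum>i\<in>UNIV. \<Sum>j\<in>UNIV. gt sL i j y * v$i * v$j) > 0"
  shows "SS sL h i j k y = (e * sL y / F y) * SS F h i j k y
          - (e * sL y / F y) / (2 * sL y) *
             (hh F i k y * HH F c sL j h y + hh F j h y * HH F c sL i k y
              - hh F h k y * HH F c sL i j y - hh F i j y * HH F c sL h k y)"
proof -
  define F0 where "F0 = F y"
  define sL0 where "sL0 = sL y"
  define \<beta> where "\<beta> = c \<bullet> y"
  define \<tau> where "\<tau> = e * sL0 / F0"
  define \<kappa> where "\<kappa> = \<tau> / (2 * sL0)"
  have F0p: "F0 > 0" and sL0p: "sL0 > 0" using F0 sL0 by (auto simp: F0_def sL0_def)
  have taup: "\<tau> > 0" using F0p sL0p e0 by (simp add: \<tau>_def)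
  have sLe: "sL0 = e * F0 + \<beta>" by (simp add: sL0_def F0_def \<beta>_def sLy)
  define g where "g = (\<chi> a b. gt F a b y)"
  define G where "G = matrix_inv g"
  have gij: "g$a$b = l$a*l$b + F0*A$a$b" for a b by (simp add: g_def gF F0_def)
  have gsym: "transpose g = g"
    by (simp add: vec_eq_iff transpose_def gij As mult.commute)
  have ginv: "invertible g"
    unfolding g_def by (rule posdef_invertible) (use pF in simp)
  have GG: "G ** g = mat 1" "g ** G = mat 1"
    using inv_props[OF ginv] by (auto simp: G_def)
  have Gsym: "transpose G = G" using inv_sym[OF gsym ginv] by (simp add: G_def)
  have Av: "(A *v u)$a = (\<Sum>b\<in>UNIV. A$a$b * u$b)" for u a
    by (simp add: matrix_vector_mult_def)
  have Ay0: "(\<Sum>b\<in>UNIV. A$a$b * y$b) = 0" for a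
    using Ay Av[of y a] by simp
  have ly: "(\<Sum>b\<in>UNIV. l$b * y$b) = F0" using lyF by (simp add: inner_vec_def F0_def)
  have gv: "g *v u = (l \<bullet> u) *\<^sub>R l + F0 *\<^sub>R (A *v u)" for u
  proof -
    have "(g *v u)$a = l$a * (\<Sum>b\<in>UNIV. l$b * u$b) + F0 * (\<Sum>b\<in>UNIV. A$a$b * u$b)" for a
      by (simp add: matrix_vector_mult_def gij algebra_simps sum.distrib sum_distrib_left)
    then show ?thesis by (simp add: vec_eq_iff inner_vec_def Av mult.commute)
  qed
  have gy: "g *v y = F0 *\<^sub>R l" using gv[of y] Ay lyF by (simp add: F0_def)
  have Gg: "G *v (g *v u) = u" for u using GG by (simp add: matrix_vector_mul_assoc)
  have gG: "g *v (G *v u) = u" for u using GG by (simp add: matrix_vector_mul_assoc)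
  have Gl: "G *v l = (1/F0) *\<^sub>R y"
  proof -
    have "G *v (F0 *\<^sub>R l) = y" using Gg[of y] gy by simp
    then have "F0 *\<^sub>R (G *v l) = y" by (simp add: matrix_vector_mult_scaleR)
    then show ?thesis using F0p by (auto simp: field_simps)
  qed
  have QS: "w \<bullet> (G *v v) = v \<bullet> (G *v w)" for w v using Q_sym[OF Gsym] .
  have lG: "l \<bullet> (G *v v) = (y \<bullet> v) / F0" for v
    using QS[of l v] Gl by (simp add: inner_commute)
  define m where "m = c - (\<beta>/F0) *\<^sub>R l"
  have mmF: "mm F c a y = m$a" for a by (simp add: mm_def m_def llF \<beta>_def F0_def)
  have my: "m \<bullet> y = 0"
    using lyF F0p by (simp add: m_def inner_diff_left \<beta>_def F0_def)
  have muF: "mu F c a y = (G *v m)$a" for a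
    by (simp add: mu_def gi_def G_def g_def matrix_vector_mult_def mmF)
  have msqF: "msq F c y = m \<bullet> (G *v m)"
    by (simp add: msq_def muF mmF inner_vec_def)
  have hhF: "hh F a b y = F0 * A$a$b" for a b by (simp add: hh_def gF llF F0_def)
  define hv where "hv a = F0 *\<^sub>R (A$a)" for a
  have hvy: "hv a \<bullet> y = 0" for a
    using Ay by (simp add: hv_def matrix_vector_mul_component[symmetric])
  have Ghv: "G *v hv a = axis a 1 - (l$a/F0) *\<^sub>R y" for a
  proof -
    have "hv a = g *v axis a 1 - l$a *\<^sub>R l"
      by (simp add: vec_eq_iff hv_def matrix_vector_mult_def gij axis_def As if_distrib
          cong: if_cong)
    then have "G *v hv a = axis a 1 - l$a *\<^sub>R (G *v l)"
      by (simp add: matrix_vector_mult_diff_distrib Gg matrix_vector_mult_scaleR)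
    then show ?thesis by (simp add: Gl)
  qed
  have Qhv: "w \<bullet> (G *v hv a) = w$a - l$a/F0 * (w \<bullet> y)" for w a
    by (simp add: Ghv inner_diff_right inner_axis)
  have csym1: "ct F a b d y = ct F b a d y" for a b d
    unfolding cF using As[of a b] Ts2[of d a b] by (simp add: algebra_simps)
  have csym2: "ct F a b d y = ct F a d b y" for a b d
  proof -
    have "T d a b = T b a d" using Ts1[of d a b] Ts2[of a d b] Ts1[of a b d] by simp
    then show ?thesis
      unfolding cF F0_def using As[of d a] As[of b a] As[of d b] by (simp add: algebra_simps)
  qed
  have scsym2: "ct sL a b d y = ct sL a d b y" for a b d
  proof -
    have "T d a b = T b a d" using Ts1[of d a b] Ts2[of a d b] Ts1[of a b d] by simp
    then show ?thesis
      unfolding cS using As[of d a] As[of b a] As[of d b] by (simp add: algebra_simps)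
  qed
  define cv where "cv a b = (\<chi> r. ct F a b r y)" for a b
  define Tv where "Tv a b = (\<chi> r. T r a b)" for a b
  have cv_dec: "cv a b = (1/2) *\<^sub>R (l$b *\<^sub>R A$a + l$a *\<^sub>R A$b + A$a$b *\<^sub>R l + F0 *\<^sub>R Tv a b)" for a b
  proof -
    have "ct F a b r y = 1/2 * (l$b * A$a$r + l$a * A$b$r + A$a$b * l$r + F0 * T r a b)" for r
      using As[of r a] As[of r b] by (simp add: cF F0_def algebra_simps)
    then show ?thesis by (simp add: vec_eq_iff cv_def Tv_def algebra_simps)
  qed
  have Tvy: "Tv a b \<bullet> y = - A$a$b" for a b
    using Ty[of a b] by (simp add: Tv_def inner_vec_def mult.commute)
  have Aay: "A$a \<bullet> y = 0" for a
    using Ay by (simp add: matrix_vector_mul_component[symmetric])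
  have cvy: "cv a b \<bullet> y = 0" for a b
    by (simp add: cv_dec inner_add_left Tvy Aay lyF F0_def)
  have cvsym: "cv a b = cv b a" for a b by (simp add: cv_def vec_eq_iff csym1)
  have cvc: "cv a b $ d = ct F a b d y" for a b d by (simp add: cv_def)
  define C where "C a b = cv a b \<bullet> (G *v m)" for a b
  have cuF: "cu F a r b y = (G *v cv a b)$r" for a r b
    by (simp add: cu_def gi_def G_def g_def matrix_vector_mult_def cv_def csym2[of a _ b])
  have HHF: "HH F c sL a b y = C a b + m$a*m$b/(2 * sL0) + F0*A$a$b * (m \<bullet> (G *v m))/(4 * sL0)" for a b
  proof -
    have "(\<Sum>r\<in>UNIV. cu F a r b y * mm F c r y) = (G *v cv a b) \<bullet> m"
      by (simp add: cuF mmF inner_vec_def)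
    also have "\<dots> = C a b" using QS[of m "cv a b"] by (simp add: C_def inner_commute)
    finally show ?thesis by (simp add: HH_def hhF msqF mmF sL0_def)
  qed
  have SSF: "SS F h a b d y = cv a b \<bullet> (G *v cv h d) - cv a d \<bullet> (G *v cv h b)" for h a b d
    by (simp add: SS_def cuF inner_vec_def sum_subtractf cvc)
  define sv where "sv = e *\<^sub>R l + c"
  define sg where "sg = (\<chi> a b. gt sL a b y)"
  define sG where "sG = matrix_inv sg"
  have sgij: "sg$a$b = sv$a* sv$b + sL0*e*A$a$b" for a b by (simp add: sg_def gS sv_def sL0_def)
  have sginv: "invertible sg"
    unfolding sg_def by (rule posdef_invertible) (use pS in simp)
  have sgv: "sg *v u = (sv \<bullet> u) *\<^sub>R sv + (sL0*e) *\<^sub>R (A *v u)" for u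
  proof -
    have "(sg *v u)$a = sv$a * (\<Sum>b\<in>UNIV. sv$b * u$b) + (sL0*e) * (\<Sum>b\<in>UNIV. A$a$b * u$b)" for a
      by (simp add: matrix_vector_mult_def sgij algebra_simps sum.distrib sum_distrib_left)
    then show ?thesis by (simp add: vec_eq_iff inner_vec_def Av mult.commute)
  qed
  have svy: "sv \<bullet> y = sL0" by (simp add: sv_def inner_add_left lyF sLe \<beta>_def F0_def)
  have AGv: "A *v (G *v v) = (1/F0) *\<^sub>R v" if "v \<bullet> y = 0" for v
  proof -
    have "g *v (G *v v) = (l \<bullet> (G *v v)) *\<^sub>R l + F0 *\<^sub>R (A *v (G *v v))" by (rule gv)
    then have "v = F0 *\<^sub>R (A *v (G *v v))" using gG[of v] lG[of v] that by (simp add: inner_commute)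
    then have "(1/F0) *\<^sub>R v = ((1/F0) * F0) *\<^sub>R (A *v (G *v v))"
      by (metis scaleR_scaleR)
    then show ?thesis using F0p by simp
  qed
  have K1: "w \<bullet> (sG *v v) = (1/\<tau>) * (w \<bullet> (G *v v))" if "w \<bullet> y = 0" "v \<bullet> y = 0" for w v
  proof -
    define \<alpha> where "\<alpha> = (sv \<bullet> (G *v v)) / (\<tau> * sL0)"
    define z where "z = (1/\<tau>) *\<^sub>R (G *v v) - \<alpha> *\<^sub>R y"
    have Az: "A *v z = (1/(\<tau>*F0)) *\<^sub>R v"
      by (simp add: z_def matrix_vector_mult_diff_distrib matrix_vector_mult_scaleR Ay AGv[OF that(2)])
    have sz: "sv \<bullet> z = 0"
      using taup sL0p by (simp add: z_def inner_diff_right svy \<alpha>_def)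
    have "sg *v z = v"
      using F0p sL0p e0 by (simp add: sgv Az sz \<tau>_def)
    then have "sG *v v = z" unfolding sG_def by (rule inv_vec[OF sginv])
    then show ?thesis using that by (simp add: z_def inner_diff_right)
  qed
  have \<kappa>e: "\<kappa> = e / (2 * F0)" using sL0p by (simp add: \<kappa>_def \<tau>_def field_simps)
  define scv where "scv a b = (\<chi> r. ct sL a b r y)" for a b
  have scv_dec: "scv a b = \<tau> *\<^sub>R cv a b + \<kappa> *\<^sub>R ((F0*A$a$b) *\<^sub>R m + m$a *\<^sub>R hv b + m$b *\<^sub>R hv a)" for a b
  proof -
    have "ct sL a b r y = \<tau> * ct F a b r y + \<kappa> * (F0*A$a$b*m$r + m$a*(F0*A$b$r) + m$b*(F0*A$a$r))" for r
    proof -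
      have e1: "ct sL a b r y = 1/2 * (e*A$a$r*(e*l$b + c$b) + (e*l$a + c$a)*e*A$b$r
                 + (e*l$r + c$r)*e*A$a$b + sL0*e*T r a b)"
        using As[of r a] As[of r b] by (simp add: cS sL0_def)
      have e2: "ct F a b r y = 1/2 * (A$a$r*l$b + l$a*A$b$r + l$r*A$a$b + F0 * T r a b)"
        using As[of r a] As[of r b] by (simp add: cF F0_def)
      have e3: "1/2 * (e*A$a$r*(e*l$b + c$b) + (e*l$a + c$a)*e*A$b$r
                 + (e*l$r + c$r)*e*A$a$b + sL0*e*T r a b) = \<tau> * (1/2 * (A$a$r*l$b + l$a*A$b$r + l$r*A$a$b + F0 * T r a b))
           + \<kappa> * (F0*A$a$b*m$r + m$a*(F0*A$b$r) + m$b*(F0*A$a$r))"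
        using F0p by (simp add: \<kappa>e \<tau>_def m_def sLe field_simps)
      show ?thesis unfolding e1 e2 by (rule e3)
    qed
    then show ?thesis by (simp add: vec_eq_iff scv_def cv_def hv_def algebra_simps)
  qed
  have scvy: "scv a b \<bullet> y = 0" for a b
    by (simp add: scv_dec inner_add_left cvy my hvy)
  have cuS: "cu sL a r b y = (sG *v scv a b)$r" for a r b
    by (simp add: cu_def gi_def sG_def sg_def matrix_vector_mult_def scv_def scsym2[of a _ b])
  have SSS: "SS sL h a b d y = (1/\<tau>) * (scv a b \<bullet> (G *v scv h d) - scv a d \<bullet> (G *v scv h b))" for h a b d
  proof -
    have "SS sL h a b d y = scv a b \<bullet> (sG *v scv h d) - scv a d \<bullet> (sG *v scv h b)"
      by (simp add: SS_def cuS inner_vec_def sum_subtractf scv_def)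
    also have "\<dots> = (1/\<tau>) * (scv a b \<bullet> (G *v scv h d)) - (1/\<tau>) * (scv a d \<bullet> (G *v scv h b))"
      by (simp add: K1 scvy)
    finally show ?thesis by (simp add: right_diff_distrib)
  qed
  define Q where "Q w v = w \<bullet> (G *v v)" for w v
  have Qadd1: "Q (w1 + w2) v = Q w1 v + Q w2 v" for w1 w2 v by (simp add: Q_def inner_add_left)
  have Qadd2: "Q w (v1 + v2) = Q w v1 + Q w v2" for w v1 v2
    by (simp add: Q_def inner_add_right matrix_vector_right_distrib)
  have Qsc1: "Q (a *\<^sub>R w) v = a * Q w v" for a w v by (simp add: Q_def)
  have Qsc2: "Q w (a *\<^sub>R v) = a * Q w v" for a w v by (simp add: Q_def matrix_vector_mult_scaleR)
  have Qs: "Q w v = Q v w" for w v unfolding Q_def by (rule QS)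
  have Qa1: "Q (cv a b) (hv d) = ct F a b d y" for a b d by (simp add: Q_def Qhv cvy cvc)
  have Qa2: "Q (hv d) (cv a b) = ct F a b d y" for a b d using Qa1 Qs by metis
  have hvc: "hv a $ b = F0 * A$a$b" for a b by (simp add: hv_def)
  have Qa3: "Q (hv a) (hv b) = F0 * A$a$b" for a b unfolding Q_def Qhv hvy hvc by simp
  have Qa4: "Q m (hv a) = m$a" for a by (simp add: Q_def Qhv my)
  have Qa5: "Q (hv a) m = m$a" for a using Qa4 Qs by metis
  have Qa6: "Q (cv a b) m = C a b" for a b by (simp add: Q_def C_def)
  have Qa7: "Q m (cv a b) = C a b" for a b using Qa6 Qs by metis
  define ms where "ms = Q m m"
  have QV: "Q (scv a b) (scv h d) = \<tau>*\<tau> * Q (cv a b) (cv h d)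
     + \<tau>*\<kappa> * (F0*A$h$d * C a b + m$h * ct F a b d y + m$d * ct F a b h y)
     + \<kappa>*\<tau> * (F0*A$a$b * C h d + m$a * ct F h d b y + m$b * ct F h d a y)
     + \<kappa>*\<kappa> * (F0*A$a$b*(F0*A$h$d)*ms + F0*A$a$b*m$h*m$d + F0*A$a$b*m$d*m$h
        + m$a*(F0*A$h$d)*m$b + m$a*m$h*(F0*A$b$d) + m$a*m$d*(F0*A$b$h)
        + m$b*(F0*A$h$d)*m$a + m$b*m$h*(F0*A$a$d) + m$b*m$d*(F0*A$a$h))" for a b h d
    unfolding scv_dec
    by (simp add: Qadd1 Qadd2 Qsc1 Qsc2 Qa1 Qa2 Qa3 Qa4 Qa5 Qa6 Qa7 ms_def[symmetric] algebra_simps)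
  have L: "SS sL h i j k y = (1/\<tau>) * (Q (scv i j) (scv h k) - Q (scv i k) (scv h j))"
    by (simp add: SSS Q_def)
  have R1: "SS F h i j k y = Q (cv i j) (cv h k) - Q (cv i k) (cv h j)"
    by (simp add: SSF Q_def)
  have msq': "m \<bullet> (G *v m) = ms" by (simp add: ms_def Q_def)
  have c1: "ct F i k j y = ct F i j k y" using csym2 by metis
  have c2: "ct F h j i y = ct F i j h y" using csym1 csym2 by metis
  have c3: "ct F h j k y = ct F h k j y" using csym2 by metis
  have c4: "ct F i k h y = ct F h k i y" using csym1 csym2 by metis
  have C1: "C j h = C h j" by (simp add: C_def cvsym)
  have tk: "e * sL y / F y = \<tau>" "\<tau> / (2 * sL y) = \<kappa>"
    by (simp_all add: \<tau>_def \<kappa>_def sL0_def F0_def)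
  have A1: "A$h$j = A$j$h" "A$k$j = A$j$k" "A$k$h = A$h$k" using As by auto
  have ar: "(1/\<tau>) * ((\<tau>*\<tau>*a + \<tau>*\<kappa>*b + \<kappa>*\<tau>*c + \<kappa>*\<kappa>*d) - (\<tau>*\<tau>*a' + \<tau>*\<kappa>*b' + \<kappa>*\<tau>*c' + \<kappa>*\<kappa>*d'))
     = \<tau>*(a - a') + \<kappa>*(b + c - b' - c' + (d - d')/(2 * sL0))" for a b c d a' b' c' d'
    using taup sL0p by (simp add: \<kappa>_def field_simps)
  show ?thesis
    unfolding L R1 QV tk hhF HHF msq' ar
    unfolding c1 c2 c3 c4 C1 A1
    using sL0p
    by (simp add: field_simps)
qed




theorem lemma4:
  fixes U :: "(real^'n::finite) set"
    and L :: "real^'n \<Rightarrow> real^'n \<Rightarrow> real"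
    and \<sigma> :: "real^'n \<Rightarrow> real"
    and b :: "real^'n \<Rightarrow> real^'n"
  assumes "open U"
    and "finsler_on U L"
    and "smooth_on U \<sigma>"
    and "\<forall>i. smooth_on U (\<lambda>x. b x $ i)"
    and "finsler_on U (\<lambda>x y. exp (\<sigma> x) * L x y + b x \<bullet> y)"
    and "x \<in> U" and "y \<noteq> 0"
  shows "let sL = (\<lambda>z. exp (\<sigma> x) * L x z + b x \<bullet> z);
             \<tau> = exp (\<sigma> x) * sL y / L x y
         in SS sL h i j k y =
              \<tau> * SS (L x) h i j k y
              - \<tau> / (2 * sL y) *
                 (hh (L x) i k y * HH (L x) (b x) sL j h y
                  + hh (L x) j h y * HH (L x) (b x) sL i k y
                  - hh (L x) h k y * HH (L x) (b x) sL i j y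
                  - hh (L x) i j y * HH (L x) (b x) sL h k y)"
proof -
  define F where "F = L x"
  define e where "e = exp (\<sigma> x)"
  define c where "c = b x"
  define sLf where "sLf = (\<lambda>z. e * F z + c \<bullet> z)"
  define P :: "(real^'n) set" where "P = UNIV - {0}"
  have P: "open P" "y \<in> P" using assms(7) by (auto simp: P_def open_Diff)
  have fin1: "smooth_on (U \<times> (UNIV - {0})) (\<lambda>(x, y). L x y)"
    and pos1: "\<And>z. z \<noteq> 0 \<Longrightarrow> F z > 0"
    and hom1: "\<And>z r. r > 0 \<Longrightarrow> F (r *\<^sub>R z) = r * F z"
    and pF: "\<forall>v. v \<noteq> 0 \<longrightarrow> (\<Sum>i\<in>UNIV. \<Sum>j\<in>UNIV. gt F i j y * v$i * v$j) > 0"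
    using assms(2,6,7) unfolding finsler_on_def F_def by auto
  have pos2: "sLf y > 0"
    and pS: "\<forall>v. v \<noteq> 0 \<longrightarrow> (\<Sum>i\<in>UNIV. \<Sum>j\<in>UNIV. gt sLf i j y * v$i * v$j) > 0"
    using assms(5,6,7) unfolding finsler_on_def sLf_def e_def F_def c_def by auto
  have e0: "e > 0" by (simp add: e_def)
  have D: "\<And>is z. z \<in> P \<Longrightarrow> (foldr pd is F) differentiable (at z)"
    using smooth_pd[OF fin1 assms(6)] by (auto simp: P_def F_def)
  have D0: "\<forall>z\<in>P. F differentiable (at z)" using D[of _ "[]"] by simp
  have D1: "\<forall>z\<in>P. pd a F differentiable (at z)" for a using D[of _ "[a]"] by simp
  have D2: "\<forall>z\<in>P. pd a (pd d F) differentiable (at z)" for a d using D[of _ "[a, d]"] by simp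
  have D3: "\<forall>z\<in>P. pd a (pd d (pd f F)) differentiable (at z)" for a d f using D[of _ "[a, d, f]"] by simp
  have cont: "continuous (at z) g" if "g differentiable (at z)" for g :: "real^'n \<Rightarrow> real" and z
    using that differentiable_imp_continuous_within by blast
  have sym2: "pd a (pd d F) w = pd d (pd a F) w" if "w \<in> P" for a d w
    using clairaut[OF P(1) that, of F a d] D0 D1 D2 cont that by blast
  have sym3a: "pd a (pd d (pd f F)) y = pd a (pd f (pd d F)) y" for a d f
    by (rule pd_cong[OF P]) (use sym2 in auto)
  have sym3b: "pd a (pd d (pd f F)) y = pd d (pd a (pd f F)) y" for a d f
  proof -
    have "pd d (pd a (pd f F)) y = pd a (pd d (pd f F)) y"
      using clairaut[OF P, of "pd f F" d a] D1 D2 D3 cont P(2) by blast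
    then show ?thesis by simp
  qed
  have hom0: "pd a F (r *\<^sub>R z) = pd a F z" if "r > 0" for a r z
  proof (cases "z = 0")
    case True then show ?thesis by simp
  next
    case False
    then have "pd a F (r *\<^sub>R z) = r / r * pd a F z"
      using pd_homog[of F r r F z a] hom1 that D0 by (auto simp: P_def)
    then show ?thesis using that by simp
  qed
  have homm1: "pd a (pd d F) (r *\<^sub>R y) = 1 / r * pd a (pd d F) y" if "r > 0" for a d r
    using pd_homog[of "pd d F" r 1 "pd d F" y a] hom0 that D1 P(2) by auto
  define l where "l = (\<chi> a. pd a F y)"
  define A where "A = (\<chi> a d. pd a (pd d F) y)"
  define T where "T a d f = pd a (pd d (pd f F)) y" for a d f
  have lyF: "l \<bullet> y = F y"
  proof -
    have "((\<lambda>t. (1 + t) * F y) has_real_derivative F y) (at 0)"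
      by (auto intro!: derivative_eq_intros)
    then have "((\<lambda>t. F (y + t *\<^sub>R y)) has_real_derivative F y) (at 0)"
    proof (rule has_field_derivative_transform_within_open[where S="{-1<..}"])
      fix t :: real assume "t \<in> {-1<..}"
      then have "F ((1 + t) *\<^sub>R y) = (1 + t) * F y" using hom1 by auto
      then show "(1 + t) * F y = F (y + t *\<^sub>R y)" by (simp add: algebra_simps)
    qed (auto simp: open_greaterThan)
    then have "(\<Sum>i\<in>UNIV. y $ i * pd i F y) = F y" using euler D0 P(2) by blast
    then show ?thesis by (simp add: l_def inner_vec_def mult.commute)
  qed
  have Ay: "A *v y = 0"
  proof -
    have "(\<Sum>d\<in>UNIV. y $ d * pd d (pd a F) y) = 0" for a
    proof -
      have "((\<lambda>t. pd a F y) has_real_derivative 0) (at 0)" by simp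
      then have "((\<lambda>t. pd a F (y + t *\<^sub>R y)) has_real_derivative 0) (at 0)"
      proof (rule has_field_derivative_transform_within_open[where S="{-1<..}"])
        fix t :: real assume "t \<in> {-1<..}"
        then have "pd a F ((1 + t) *\<^sub>R y) = pd a F y" using hom0 by auto
        then show "pd a F y = pd a F (y + t *\<^sub>R y)" by (simp add: algebra_simps)
      qed (auto simp: open_greaterThan)
      then show ?thesis using euler D1 P(2) by blast
    qed
    then show ?thesis
      by (simp add: vec_eq_iff A_def matrix_vector_mult_def sym2[OF P(2)] mult.commute)
  qed
  have As: "A$a$d = A$d$a" for a d by (simp add: A_def sym2[OF P(2)])
  have Ts1: "T a d f = T d a f" for a d f unfolding T_def by (rule sym3b)
  have Ts2: "T a d f = T a f d" for a d f unfolding T_def by (rule sym3a)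
  have Ty: "(\<Sum>a\<in>UNIV. y$a * T a d f) = - A$d$f" for d f
  proof -
    have "((\<lambda>t. pd d (pd f F) y / (1 + t)) has_real_derivative - pd d (pd f F) y) (at 0)"
      by (auto intro!: derivative_eq_intros simp: power2_eq_square)
    then have "((\<lambda>t. pd d (pd f F) (y + t *\<^sub>R y)) has_real_derivative - pd d (pd f F) y) (at 0)"
    proof (rule has_field_derivative_transform_within_open[where S="{-1<..}"])
      fix t :: real assume "t \<in> {-1<..}"
      then have "pd d (pd f F) ((1 + t) *\<^sub>R y) = 1 / (1 + t) * pd d (pd f F) y" using homm1 by auto
      then show "pd d (pd f F) y / (1 + t) = pd d (pd f F) (y + t *\<^sub>R y)" by (simp add: algebra_simps)
    qed (auto simp: open_greaterThan)
    then have "(\<Sum>a\<in>UNIV. y $ a * pd a (pd d (pd f F)) y) = - pd d (pd f F) y"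
      by (rule euler[OF D2[of d f, rule_format, OF P(2)]])
    then show ?thesis by (simp add: T_def A_def)
  qed
  have gF: "gt F a d y = l$a*l$d + F y * A$a$d" for a d
    using gt_formula[OF P D0 D1] by (simp add: l_def A_def)
  have cF: "ct F a d f y = 1/2 * (A$f$a*l$d + l$a*A$f$d + l$f*A$a$d + F y * T f a d)" for a d f
    using ct_formula[OF P D0 D1 D1 D2] by (simp add: l_def A_def T_def)
  have dsL: "\<forall>z\<in>P. sLf differentiable (at z)"
    using D0 unfolding sLf_def by (auto intro!: differentiable_add differentiable_mult
        bounded_linear_imp_differentiable bounded_linear_inner_right)
  have s1: "pd a sLf w = e * pd a F w + c$a" if "w \<in> P" for a w
  proof -
    have "pd a sLf w = pd a (\<lambda>z. e * F z) w + pd a (\<lambda>z. c \<bullet> z) w"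
      unfolding sLf_def using D0 that
      by (intro pd_add) (auto intro!: bounded_linear_imp_differentiable bounded_linear_inner_right)
    then show ?thesis using pd_cmult[of F w a e] D0 that pd_inner by simp
  qed
  have ds1: "\<forall>z\<in>P. pd a sLf differentiable (at z)" for a
  proof
    fix z assume z: "z \<in> P"
    have "(\<lambda>w. e * pd a F w + c$a) differentiable (at z)" using D1 z by auto
    then show "pd a sLf differentiable (at z)"
      using diff_transform_open[OF P(1) z, of "\<lambda>w. e * pd a F w + c$a"] s1 by auto
  qed
  have s2: "pd a (pd d sLf) w = e * pd a (pd d F) w" if "w \<in> P" for a d w
  proof -
    have "pd a (pd d sLf) w = pd a (\<lambda>w. e * pd d F w + c$d) w"
      by (rule pd_cong[OF P(1) that]) (use s1 in auto)
    also have "\<dots> = pd a (\<lambda>w. e * pd d F w) w + pd a (\<lambda>w. c$d) w"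
      using D1 that by (intro pd_add) auto
    also have "\<dots> = e * pd a (pd d F) w" using D1 that by (simp add: pd_cmult pd_const)
    finally show ?thesis .
  qed
  have ds2: "\<forall>z\<in>P. pd a (pd d sLf) differentiable (at z)" for a d
  proof
    fix z assume z: "z \<in> P"
    have "(\<lambda>w. e * pd a (pd d F) w) differentiable (at z)" using D2 z by auto
    then show "pd a (pd d sLf) differentiable (at z)"
      using diff_transform_open[OF P(1) z, of "\<lambda>w. e * pd a (pd d F) w"] s2 by auto
  qed
  have s3: "pd f (pd a (pd d sLf)) y = e * T f a d" for f a d
  proof -
    have "pd f (pd a (pd d sLf)) y = pd f (\<lambda>w. e * pd a (pd d F) w) y"
      by (rule pd_cong[OF P]) (use s2 in auto)
    also have "\<dots> = e * T f a d" using D2 P(2) by (simp add: pd_cmult T_def)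
    finally show ?thesis .
  qed
  have sLy: "sLf y = e * F y + c \<bullet> y" by (simp add: sLf_def)
  have gS: "gt sLf a d y = (e*l$a + c$a)*(e*l$d + c$d) + sLf y * e * A$a$d" for a d
    using gt_formula[OF P dsL ds1, of a d] s1[OF P(2)] s2[OF P(2)] by (simp add: l_def A_def)
  have cS: "ct sLf a d f y = 1/2 * (e*A$f$a*(e*l$d + c$d) + (e*l$a + c$a)*e*A$f$d
                 + (e*l$f + c$f)*e*A$a$d + sLf y*e*T f a d)" for a d f
    using ct_formula[OF P dsL ds1 ds1 ds2, of a d f] s1[OF P(2)] s2[OF P(2)] s3
    by (simp add: l_def A_def mult_ac)
  have llF: "ll F a y = l$a" for a by (simp add: ll_def l_def)
  have main: "SS sLf h i j k y = (e * sLf y / F y) * SS F h i j k y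
          - (e * sLf y / F y) / (2 * sLf y) *
             (hh F i k y * HH F c sLf j h y + hh F j h y * HH F c sLf i k y
              - hh F h k y * HH F c sLf i j y - hh F i j y * HH F c sLf h k y)"
    by (rule alg[OF pos1[OF assms(7)] e0 sLy pos2 llF lyF Ay As Ts1 Ts2 Ty gF cF gS cS pF pS])
  then show ?thesis unfolding Let_def sLf_def F_def e_def c_def .
qed


end
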